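(* Let $G$ be a finite simple graph on $\{x_1,\dots,x_n\}$, $S=\mathbb{K}[x_1,\dots,x_n]$, and let $x_ix_j$ be an edge of $G$. Set $L:=N_G(x_i)\cap N_G(x_j)$ and let $G'$ be the graph with $V(G')=V(G)\setminus L$ and edge set $$E(G')=E(G\setminus L)\cup\{x_px_q\mid x_p\in N_{G\setminus L}(x_i),\ x_q\in N_{G\setminus L}(x_j)\}.$$ Then, as ideals of $S$, $$(I(G):x_i)\cap (I(G):x_j)=I(G')+(L),$$ where $(L)$ is the ideal generated by the variables in $L$.
   Context: Vertices of $G$ are identified with variables of $S$; the edge ideal is $I(G)=(x_px_q : x_px_q\in E(G))\subseteq S$, and for a graph on a subset of the vertices its edge ideal is likewise taken in $S$. $N_G(x)$ denotes the neighbour set of $x$. For $U\subseteq V(G)$, $G\setminus U$ has vertex set $V(G)\setminus U$ and edge set $\{e\in E(G): e\cap U=\emptyset\}$. $(I:u)$ denotes the colon ideal $\{f\in S: fu\in I\}$. *)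

theory Defs
  imports Main HOL.Modules "HOL-Library.Poly_Mapping"
begin

text \<open>Polynomial ring S = K[x_v : v in 'v] is modelled as
  (('v =>0 nat) =>0 'k): finitely supported maps from exponent vectors (monomials)
  to coefficients, with the convolution product from Poly_Mapping.\<close>

definition var :: "'v \<Rightarrow> ('v \<Rightarrow>\<^sub>0 nat) \<Rightarrow>\<^sub>0 'k::comm_ring_1" where
  "var v = Poly_Mapping.single (Poly_Mapping.single v 1) 1"

definition ideal_gen :: "'a::comm_ring_1 set \<Rightarrow> 'a set" where
  "ideal_gen A = module.span (*) A"

definition ideal_sum :: "'a::comm_ring_1 set \<Rightarrow> 'a set \<Rightarrow> 'a set" where
  "ideal_sum I J = {a + b | a b. a \<in> I \<and> b \<in> J}"

definition colon :: "'a::comm_ring_1 set \<Rightarrow> 'a \<Rightarrow> 'a set" where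
  "colon I u = {f. f * u \<in> I}"

text \<open>Graphs: a simple graph on vertex set 'v is given by its edge set, a set of 2-element sets.\<close>
definition edge_ideal :: "'v set set \<Rightarrow> (('v \<Rightarrow>\<^sub>0 nat) \<Rightarrow>\<^sub>0 'k::comm_ring_1) set" where
  "edge_ideal E = ideal_gen {var p * var q | p q. {p, q} \<in> E}"

definition nbr :: "'v set set \<Rightarrow> 'v \<Rightarrow> 'v set" where
  "nbr E x = {y. {x, y} \<in> E}"

definition del_vertices :: "'v set set \<Rightarrow> 'v set \<Rightarrow> 'v set set" where
  "del_vertices E U = {e \<in> E. e \<inter> U = {}}"

text \<open>Edge set of the graph G' from the lemma (its vertex set is V(G) minus L).\<close>
definition graph_G' :: "'v set set \<Rightarrow> 'v \<Rightarrow> 'v \<Rightarrow> 'v set set" where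
  "graph_G' E i j =
     (let L = nbr E i \<inter> nbr E j; E0 = del_vertices E L in
      E0 \<union> {{p, q} | p q. p \<in> nbr E0 i \<and> q \<in> nbr E0 j})"

end

theory Submission imports Defs begin

lemma mod_mult: "module ((*) :: 'a::comm_ring_1 \<Rightarrow> 'a \<Rightarrow> 'a)"
  by unfold_locales (auto simp: algebra_simps)

definition MI :: "('v \<Rightarrow>\<^sub>0 nat) set \<Rightarrow> (('v \<Rightarrow>\<^sub>0 nat) \<Rightarrow>\<^sub>0 'k::comm_ring_1) set" where
  "MI M = ideal_gen ((\<lambda>m. Poly_Mapping.single m 1) ` M)"

lemma expand: "f = (\<Sum>a\<in>Poly_Mapping.keys f. Poly_Mapping.single a (Poly_Mapping.lookup f a))"
proof (rule poly_mapping_eqI)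
  fix k
  show "Poly_Mapping.lookup f k = Poly_Mapping.lookup (\<Sum>a\<in>Poly_Mapping.keys f. Poly_Mapping.single a (Poly_Mapping.lookup f a)) k"
    by (simp add: lookup_sum lookup_single when_def sum.delta in_keys_iff)
qed

lemma shift_lookup:
  fixes f :: "('v \<Rightarrow>\<^sub>0 nat) \<Rightarrow>\<^sub>0 'k::comm_ring_1"
  shows "Poly_Mapping.lookup (f * Poly_Mapping.single m 1) (a + m) = Poly_Mapping.lookup f a"
proof -
  have "f * Poly_Mapping.single m 1 = (\<Sum>b\<in>Poly_Mapping.keys f. Poly_Mapping.single b (Poly_Mapping.lookup f b) * Poly_Mapping.single m 1)"
    by (subst expand) (simp add: sum_distrib_right)
  also have "\<dots> = (\<Sum>b\<in>Poly_Mapping.keys f. Poly_Mapping.single (b + m) (Poly_Mapping.lookup f b))"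
    by (simp add: mult_single)
  finally show ?thesis
    by (simp add: lookup_sum lookup_single when_def sum.delta in_keys_iff)
qed

lemma mem_MI:
  fixes f :: "('v \<Rightarrow>\<^sub>0 nat) \<Rightarrow>\<^sub>0 'k::comm_ring_1"
  shows "f \<in> MI M \<longleftrightarrow> (\<forall>a\<in>Poly_Mapping.keys f. \<exists>m\<in>M. \<exists>c. a = m + c)"
proof
  let ?T = "{f :: ('v \<Rightarrow>\<^sub>0 nat) \<Rightarrow>\<^sub>0 'k. \<forall>a\<in>Poly_Mapping.keys f. \<exists>m\<in>M. \<exists>c. a = m + c}"
  have sub: "module.subspace (*) ?T"
    unfolding module.subspace_def[OF mod_mult]
  proof (intro conjI allI ballI)
    show "0 \<in> ?T" by simp
  next
    fix x y assume "x \<in> ?T" "y \<in> ?T"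
    then show "x + y \<in> ?T" using keys_add[of x y] unfolding mem_Collect_eq by (meson Un_iff subsetD)
  next
    fix c x assume x: "x \<in> ?T"
    show "c * x \<in> ?T"
    proof (rule CollectI, rule ballI)
      fix a assume "a \<in> Poly_Mapping.keys (c * x)"
      then obtain a1 b where "a = a1 + b" "b \<in> Poly_Mapping.keys x" using keys_mult by blast
      then obtain m d where "m \<in> M" "b = m + d" using x by blast
      then show "\<exists>m\<in>M. \<exists>c. a = m + c" using \<open>a = a1 + b\<close>
        by (metis add.commute add.left_commute)
    qed
  qed
  have gen: "(\<lambda>m. Poly_Mapping.single m 1) ` M \<subseteq> ?T"
  proof (rule image_subsetI, rule CollectI, rule ballI)
    fix m a assume "m \<in> M" "a \<in> Poly_Mapping.keys (Poly_Mapping.single m (1::'k))"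
    then have "a = m" by (simp split: if_splits)
    then show "\<exists>m\<in>M. \<exists>c. a = m + c" using \<open>m \<in> M\<close> by (metis add.right_neutral)
  qed
  assume "f \<in> MI M"
  then show "\<forall>a\<in>Poly_Mapping.keys f. \<exists>m\<in>M. \<exists>c. a = m + c"
    using module.span_minimal[OF mod_mult gen sub] unfolding MI_def ideal_gen_def by blast
next
  assume H: "\<forall>a\<in>Poly_Mapping.keys f. \<exists>m\<in>M. \<exists>c. a = m + c"
  have "(\<Sum>a\<in>Poly_Mapping.keys f. Poly_Mapping.single a (Poly_Mapping.lookup f a)) \<in> MI M"
    unfolding MI_def ideal_gen_def
  proof (rule module.span_sum[OF mod_mult])
    fix a assume "a \<in> Poly_Mapping.keys f"
    then obtain m c where mc: "m \<in> M" "a = m + c" using H by blast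
    have "Poly_Mapping.single a (Poly_Mapping.lookup f a) = Poly_Mapping.single c (Poly_Mapping.lookup f a) * Poly_Mapping.single m 1"
      unfolding mc by (simp add: mult_single add.commute)
    moreover have "Poly_Mapping.single m 1 \<in> module.span (*) ((\<lambda>m. Poly_Mapping.single m (1::'k)) ` M)"
      by (intro module.span_base[OF mod_mult] imageI mc(1))
    ultimately show "Poly_Mapping.single a (Poly_Mapping.lookup f a) \<in> module.span (*) ((\<lambda>m. Poly_Mapping.single m (1::'k)) ` M)"
      by (metis module.span_scale[OF mod_mult])
  qed
  then show "f \<in> MI M" by (simp only: expand[of f, symmetric])
qed

lemma colon_MI:
  fixes f :: "('v \<Rightarrow>\<^sub>0 nat) \<Rightarrow>\<^sub>0 'k::comm_ring_1"
  shows "f \<in> colon (MI M) (var i) \<longleftrightarrow> (\<forall>a\<in>Poly_Mapping.keys f. \<exists>m\<in>M. \<exists>c. a + Poly_Mapping.single i 1 = m + c)"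
proof -
  let ?s = "Poly_Mapping.single i (1::nat)"
  have k1: "a + ?s \<in> Poly_Mapping.keys (f * var i)" if "a \<in> Poly_Mapping.keys f" for a
    using that shift_lookup[of f ?s a] by (simp add: var_def in_keys_iff)
  have k2: "\<exists>a\<in>Poly_Mapping.keys f. b = a + ?s" if "b \<in> Poly_Mapping.keys (f * var i)" for b
    using that keys_mult[of f "var i"] by (auto simp: var_def)
  show ?thesis unfolding colon_def mem_Collect_eq mem_MI
  proof (intro iffI ballI)
    assume A: "\<forall>b\<in>Poly_Mapping.keys (f * var i). \<exists>m\<in>M. \<exists>c. b = m + c"
    fix a assume "a \<in> Poly_Mapping.keys f"
    show "\<exists>m\<in>M. \<exists>c. a + ?s = m + c" by (rule bspec[OF A k1[OF \<open>a \<in> Poly_Mapping.keys f\<close>]])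
  next
    assume B: "\<forall>a\<in>Poly_Mapping.keys f. \<exists>m\<in>M. \<exists>c. a + ?s = m + c"
    fix b assume "b \<in> Poly_Mapping.keys (f * var i)"
    then obtain a where "a \<in> Poly_Mapping.keys f" "b = a + ?s" using k2 by blast
    then show "\<exists>m\<in>M. \<exists>c. b = m + c" using bspec[OF B] by simp
  qed
qed

lemma sum_MI: "ideal_sum (MI A) (MI B) = MI (A \<union> B)"
  unfolding ideal_sum_def MI_def ideal_gen_def image_Un module.span_Un[OF mod_mult] by simp

lemma edge_MI: "(edge_ideal E :: (('v \<Rightarrow>\<^sub>0 nat) \<Rightarrow>\<^sub>0 'k::comm_ring_1) set)
   = MI {Poly_Mapping.single p 1 + Poly_Mapping.single q 1 | p q. {p, q} \<in> E}"
  unfolding edge_ideal_def MI_def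
  by (rule arg_cong[where f=ideal_gen]) (auto simp: var_def mult_single)

lemma var_MI: "(ideal_gen (var ` L) :: (('v \<Rightarrow>\<^sub>0 nat) \<Rightarrow>\<^sub>0 'k::comm_ring_1) set)
   = MI ((\<lambda>p. Poly_Mapping.single p 1) ` L)"
  unfolding MI_def by (simp add: var_def image_image)


lemma comb:
  assumes simple: "\<forall>e\<in>E. card e = 2" and edge: "{i, j} \<in> E"
  shows "((\<exists>p q. {p,q}\<in>E \<and> (A p \<or> p=i) \<and> (A q \<or> q=i)) \<and> (\<exists>p q. {p,q}\<in>E \<and> (A p \<or> p=j) \<and> (A q \<or> q=j)))
     \<longleftrightarrow> ((\<exists>p q. {p,q}\<in>graph_G' E i j \<and> A p \<and> A q) \<or> (\<exists>p\<in>nbr E i \<inter> nbr E j. A p))"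
proof -
  define L where "L = nbr E i \<inter> nbr E j"
  have neq: "p \<noteq> q" if "{p,q} \<in> E" for p q
  proof
    assume "p = q"
    then have "card {p,q} = 1" by simp
    then show False using simple that by fastforce
  qed
  have iL: "i \<notin> L" unfolding L_def nbr_def using neq by blast
  have jL: "j \<notin> L" unfolding L_def nbr_def using neq by blast
  have N: "nbr (del_vertices E L) x = nbr E x - L" if "x \<notin> L" for x
    using that unfolding nbr_def del_vertices_def by auto
  have G': "graph_G' E i j = del_vertices E L \<union> {{p,q}|p q. p \<in> nbr E i - L \<and> q \<in> nbr E j - L}"
    unfolding graph_G'_def Let_def L_def[symmetric] N[OF iL] N[OF jL] by simp
  have hi: "(\<exists>p q. {p,q}\<in>E \<and> (A p \<or> p=x) \<and> (A q \<or> q=x)) \<longleftrightarrow> (\<exists>p q. {p,q}\<in>E \<and> A p \<and> A q) \<or> (\<exists>y\<in>nbr E x. A y)" for x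
  proof
    assume "\<exists>p q. {p,q}\<in>E \<and> (A p \<or> p=x) \<and> (A q \<or> q=x)"
    then obtain p q where pq: "{p,q}\<in>E" "A p \<or> p=x" "A q \<or> q=x" by blast
    have "p \<noteq> q" using neq pq(1) .
    show "(\<exists>p q. {p,q}\<in>E \<and> A p \<and> A q) \<or> (\<exists>y\<in>nbr E x. A y)"
    proof (cases "p = x")
      case True
      then have "A q" "q \<in> nbr E x" using pq \<open>p \<noteq> q\<close> by (auto simp: nbr_def)
      then show ?thesis by blast
    next
      case False
      note F = False
      show ?thesis
      proof (cases "q = x")
        case True
        then have "A p" "p \<in> nbr E x" using pq F by (auto simp: nbr_def insert_commute)
        then show ?thesis by blast
      next
        case False
        then show ?thesis using pq F by blast
      qed
    qed
  next
    assume "(\<exists>p q. {p,q}\<in>E \<and> A p \<and> A q) \<or> (\<exists>y\<in>nbr E x. A y)"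
    then show "\<exists>p q. {p,q}\<in>E \<and> (A p \<or> p=x) \<and> (A q \<or> q=x)"
    proof
      assume "\<exists>y\<in>nbr E x. A y"
      then obtain y where "{x,y} \<in> E" "A y" by (auto simp: nbr_def)
      then show ?thesis by blast
    qed blast
  qed
  show ?thesis
    unfolding L_def[symmetric] hi[of i] hi[of j] G'
  proof
    assume H: "((\<exists>p q. {p, q} \<in> E \<and> A p \<and> A q) \<or> (\<exists>y\<in>nbr E i. A y)) \<and>
        ((\<exists>p q. {p, q} \<in> E \<and> A p \<and> A q) \<or> (\<exists>y\<in>nbr E j. A y))"
    show "(\<exists>p q. {p, q} \<in> del_vertices E L \<union> {{p, q} |p q. p \<in> nbr E i - L \<and> q \<in> nbr E j - L} \<and> A p \<and> A q) \<or>
          (\<exists>p\<in>L. A p)"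
    proof (cases "\<exists>p q. {p, q} \<in> E \<and> A p \<and> A q")
      case True
      then obtain p q where pq: "{p, q} \<in> E" "A p" "A q" by blast
      show ?thesis
      proof (cases "p \<in> L \<or> q \<in> L")
        case True then show ?thesis using pq by blast
      next
        case False
        then have "{p,q} \<in> del_vertices E L" using pq unfolding del_vertices_def by auto
        then show ?thesis using pq by blast
      qed
    next
      case False
      then obtain y z where yz: "y \<in> nbr E i" "A y" "z \<in> nbr E j" "A z" using H by blast
      show ?thesis
      proof (cases "y \<in> L \<or> z \<in> L")
        case True then show ?thesis using yz by blast
      next
        case False
        then have "{y,z} \<in> {{p, q} |p q. p \<in> nbr E i - L \<and> q \<in> nbr E j - L}" using yz by blast
        then show ?thesis using yz by blast
      qed
    qed
  next
    assume "(\<exists>p q. {p, q} \<in> del_vertices E L \<union> {{p, q} |p q. p \<in> nbr E i - L \<and> q \<in> nbr E j - L} \<and> A p \<and> A q) \<or>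
          (\<exists>p\<in>L. A p)"
    then show "((\<exists>p q. {p, q} \<in> E \<and> A p \<and> A q) \<or> (\<exists>y\<in>nbr E i. A y)) \<and>
        ((\<exists>p q. {p, q} \<in> E \<and> A p \<and> A q) \<or> (\<exists>y\<in>nbr E j. A y))"
    proof
      assume "\<exists>p\<in>L. A p"
      then show ?thesis unfolding L_def by blast
    next
      assume "\<exists>p q. {p, q} \<in> del_vertices E L \<union> {{p, q} |p q. p \<in> nbr E i - L \<and> q \<in> nbr E j - L} \<and> A p \<and> A q"
      then obtain p q where pq: "{p, q} \<in> del_vertices E L \<union> {{p, q} |p q. p \<in> nbr E i - L \<and> q \<in> nbr E j - L}" "A p" "A q" by blast
      from pq(1) show ?thesis
      proof
        assume "{p, q} \<in> del_vertices E L"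
        then have "{p,q} \<in> E" by (simp add: del_vertices_def)
        then show ?thesis using pq by blast
      next
        assume "{p, q} \<in> {{p, q} |p q. p \<in> nbr E i - L \<and> q \<in> nbr E j - L}"
        then obtain y z where yz: "{p,q} = {y,z}" "y \<in> nbr E i" "z \<in> nbr E j" by blast
        then have "A y" "A z" using pq by (auto simp: doubleton_eq_iff)
        then show ?thesis using yz by blast
      qed
    qed
  qed
qed


lemma dvd_iff:
  fixes a m :: "'v \<Rightarrow>\<^sub>0 nat"
  shows "(\<exists>c. a = m + c) \<longleftrightarrow> (\<forall>v. Poly_Mapping.lookup m v \<le> Poly_Mapping.lookup a v)"
proof
  assume "\<exists>c. a = m + c"
  then obtain c where "a = m + c" by blast
  then show "\<forall>v. Poly_Mapping.lookup m v \<le> Poly_Mapping.lookup a v" by (simp add: lookup_add)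
next
  assume H: "\<forall>v. Poly_Mapping.lookup m v \<le> Poly_Mapping.lookup a v"
  have "a = m + (a - m)"
  proof (rule poly_mapping_eqI)
    fix k show "Poly_Mapping.lookup a k = Poly_Mapping.lookup (m + (a - m)) k"
      using H[rule_format, of k] by (simp add: lookup_add lookup_minus)
  qed
  then show "\<exists>c. a = m + c" by blast
qed

lemma d2:
  fixes a :: "'v \<Rightarrow>\<^sub>0 nat"
  assumes "p \<noteq> q"
  shows "(\<exists>c. a = Poly_Mapping.single p 1 + Poly_Mapping.single q 1 + c) \<longleftrightarrow>
     Poly_Mapping.lookup a p \<noteq> 0 \<and> Poly_Mapping.lookup a q \<noteq> 0"
  unfolding dvd_iff
proof
  assume H: "\<forall>v. Poly_Mapping.lookup (Poly_Mapping.single p 1 + Poly_Mapping.single q 1) v \<le> Poly_Mapping.lookup a v"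
  show "Poly_Mapping.lookup a p \<noteq> 0 \<and> Poly_Mapping.lookup a q \<noteq> 0"
    using H[rule_format, of p] H[rule_format, of q] assms by (simp add: lookup_add lookup_single when_def)
next
  assume "Poly_Mapping.lookup a p \<noteq> 0 \<and> Poly_Mapping.lookup a q \<noteq> 0"
  then show "\<forall>v. Poly_Mapping.lookup (Poly_Mapping.single p 1 + Poly_Mapping.single q 1) v \<le> Poly_Mapping.lookup a v"
    using assms by (auto simp: lookup_add lookup_single when_def)
qed

lemma d2i:
  fixes a :: "'v \<Rightarrow>\<^sub>0 nat"
  assumes "p \<noteq> q"
  shows "(\<exists>c. a + Poly_Mapping.single i 1 = Poly_Mapping.single p 1 + Poly_Mapping.single q 1 + c) \<longleftrightarrow>
     (Poly_Mapping.lookup a p \<noteq> 0 \<or> p = i) \<and> (Poly_Mapping.lookup a q \<noteq> 0 \<or> q = i)"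
  unfolding dvd_iff
proof
  assume H: "\<forall>v. Poly_Mapping.lookup (Poly_Mapping.single p 1 + Poly_Mapping.single q 1) v \<le> Poly_Mapping.lookup (a + Poly_Mapping.single i 1) v"
  show "(Poly_Mapping.lookup a p \<noteq> 0 \<or> p = i) \<and> (Poly_Mapping.lookup a q \<noteq> 0 \<or> q = i)"
    using H[rule_format, of p] H[rule_format, of q] assms by (auto simp: lookup_add lookup_single when_def split: if_splits)
next
  assume "(Poly_Mapping.lookup a p \<noteq> 0 \<or> p = i) \<and> (Poly_Mapping.lookup a q \<noteq> 0 \<or> q = i)"
  then show "\<forall>v. Poly_Mapping.lookup (Poly_Mapping.single p 1 + Poly_Mapping.single q 1) v \<le> Poly_Mapping.lookup (a + Poly_Mapping.single i 1) v"
    using assms by (auto simp: lookup_add lookup_single when_def)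
qed

lemma d1:
  fixes a :: "'v \<Rightarrow>\<^sub>0 nat"
  shows "(\<exists>c. a = Poly_Mapping.single p 1 + c) \<longleftrightarrow> Poly_Mapping.lookup a p \<noteq> 0"
  unfolding dvd_iff
proof
  assume H: "\<forall>v. Poly_Mapping.lookup (Poly_Mapping.single p 1) v \<le> Poly_Mapping.lookup a v"
  show "Poly_Mapping.lookup a p \<noteq> 0" using H[rule_format, of p] by simp
next
  assume "Poly_Mapping.lookup a p \<noteq> 0"
  then show "\<forall>v. Poly_Mapping.lookup (Poly_Mapping.single p 1) v \<le> Poly_Mapping.lookup a v"
    by (simp add: lookup_single when_def)
qed

lemma neqE: assumes "\<forall>e\<in>E. card e = 2" "{p,q} \<in> E" shows "p \<noteq> q"
proof
  assume "p = q"
  then have "card {p,q} = 1" by simp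
  then show False using assms by fastforce
qed

lemma neqG': assumes s: "\<forall>e\<in>E. card e = 2" and pq: "{p,q} \<in> graph_G' E i j" shows "p \<noteq> q"
proof
  assume "p = q"
  let ?L = "nbr E i \<inter> nbr E j"
  from pq consider "{p,q} \<in> del_vertices E ?L"
    | y z where "{p,q} = {y,z}" "y \<in> nbr (del_vertices E ?L) i" "z \<in> nbr (del_vertices E ?L) j"
    unfolding graph_G'_def Let_def by blast
  then show False
  proof cases
    case 1
    then have "{p,q} \<in> E" by (simp add: del_vertices_def)
    then show ?thesis using neqE[OF s] \<open>p = q\<close> by blast
  next
    case 2
    then have "y = p" "z = p" using \<open>p = q\<close> by (auto simp: doubleton_eq_iff)
    then show ?thesis using 2 by (auto simp: nbr_def del_vertices_def)
  qed
qed

theorem lemma3p2: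
  fixes E :: "'v::finite set set" and i j :: 'v
  assumes simple: "\<forall>e\<in>E. card e = 2"
    and edge: "{i, j} \<in> E"
  shows "(colon (edge_ideal E) (var i) \<inter> colon (edge_ideal E) (var j)
            :: (('v \<Rightarrow>\<^sub>0 nat) \<Rightarrow>\<^sub>0 'k::field) set)
         = ideal_sum (edge_ideal (graph_G' E i j))
             (ideal_gen (var ` (nbr E i \<inter> nbr E j)))"
proof -
  let ?s = "\<lambda>p. Poly_Mapping.single p (1::nat)"
  let ?E' = "graph_G' E i j"
  let ?L = "nbr E i \<inter> nbr E j"
  have ME: "(\<exists>m\<in>{?s p + ?s q | p q. {p,q}\<in>E}. \<exists>c. a + ?s x = m + c) \<longleftrightarrow>
     (\<exists>p q. {p,q}\<in>E \<and> (Poly_Mapping.lookup a p \<noteq> 0 \<or> p=x) \<and> (Poly_Mapping.lookup a q \<noteq> 0 \<or> q=x))" for a x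
  proof
    assume "\<exists>m\<in>{?s p + ?s q | p q. {p,q}\<in>E}. \<exists>c. a + ?s x = m + c"
    then obtain p q c where "{p,q} \<in> E" "a + ?s x = ?s p + ?s q + c" by blast
    then show "\<exists>p q. {p,q}\<in>E \<and> (Poly_Mapping.lookup a p \<noteq> 0 \<or> p=x) \<and> (Poly_Mapping.lookup a q \<noteq> 0 \<or> q=x)"
      using d2i[OF neqE[OF simple], of p q a x] by blast
  next
    assume "\<exists>p q. {p,q}\<in>E \<and> (Poly_Mapping.lookup a p \<noteq> 0 \<or> p=x) \<and> (Poly_Mapping.lookup a q \<noteq> 0 \<or> q=x)"
    then obtain p q where pq: "{p,q} \<in> E" "(Poly_Mapping.lookup a p \<noteq> 0 \<or> p=x) \<and> (Poly_Mapping.lookup a q \<noteq> 0 \<or> q=x)" by blast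
    then obtain c where "a + ?s x = ?s p + ?s q + c" using d2i[OF neqE[OF simple], of p q a x] by blast
    then show "\<exists>m\<in>{?s p + ?s q | p q. {p,q}\<in>E}. \<exists>c. a + ?s x = m + c" using pq(1) by blast
  qed
  have MR: "(\<exists>m\<in>{?s p + ?s q | p q. {p,q}\<in>?E'} \<union> ?s ` ?L. \<exists>c. a = m + c) \<longleftrightarrow>
     (\<exists>p q. {p,q}\<in>?E' \<and> Poly_Mapping.lookup a p \<noteq> 0 \<and> Poly_Mapping.lookup a q \<noteq> 0) \<or> (\<exists>p\<in>?L. Poly_Mapping.lookup a p \<noteq> 0)" for a
  proof
    assume "\<exists>m\<in>{?s p + ?s q | p q. {p,q}\<in>?E'} \<union> ?s ` ?L. \<exists>c. a = m + c"
    then obtain m c where m: "m \<in> {?s p + ?s q | p q. {p,q}\<in>?E'} \<union> ?s ` ?L" "a = m + c" by blast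
    from m(1) show "(\<exists>p q. {p,q}\<in>?E' \<and> Poly_Mapping.lookup a p \<noteq> 0 \<and> Poly_Mapping.lookup a q \<noteq> 0) \<or> (\<exists>p\<in>?L. Poly_Mapping.lookup a p \<noteq> 0)"
    proof
      assume "m \<in> {?s p + ?s q | p q. {p,q}\<in>?E'}"
      then obtain p q where "{p,q} \<in> ?E'" "m = ?s p + ?s q" by blast
      then show ?thesis using d2[OF neqG'[OF simple], of p q i j a] m(2) by blast
    next
      assume "m \<in> ?s ` ?L"
      then obtain p where "p \<in> ?L" "m = ?s p" by blast
      then show ?thesis using d1[of a p] m(2) by blast
    qed
  next
    assume "(\<exists>p q. {p,q}\<in>?E' \<and> Poly_Mapping.lookup a p \<noteq> 0 \<and> Poly_Mapping.lookup a q \<noteq> 0) \<or> (\<exists>p\<in>?L. Poly_Mapping.lookup a p \<noteq> 0)"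
    then show "\<exists>m\<in>{?s p + ?s q | p q. {p,q}\<in>?E'} \<union> ?s ` ?L. \<exists>c. a = m + c"
    proof
      assume "\<exists>p q. {p,q}\<in>?E' \<and> Poly_Mapping.lookup a p \<noteq> 0 \<and> Poly_Mapping.lookup a q \<noteq> 0"
      then obtain p q where pq: "{p,q}\<in>?E'" "Poly_Mapping.lookup a p \<noteq> 0 \<and> Poly_Mapping.lookup a q \<noteq> 0" by blast
      then obtain c where "a = ?s p + ?s q + c" using d2[OF neqG'[OF simple], of p q i j a] by blast
      then show ?thesis using pq(1) by blast
    next
      assume "\<exists>p\<in>?L. Poly_Mapping.lookup a p \<noteq> 0"
      then obtain p where p: "p \<in> ?L" "Poly_Mapping.lookup a p \<noteq> 0" by blast
      then obtain c where "a = ?s p + c" using d1[of a p] by blast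
      then show ?thesis using p(1) by blast
    qed
  qed
  show ?thesis
  proof (rule set_eqI)
    fix f :: "('v \<Rightarrow>\<^sub>0 nat) \<Rightarrow>\<^sub>0 'k"
    have "f \<in> colon (edge_ideal E) (var i) \<inter> colon (edge_ideal E) (var j) \<longleftrightarrow>
      (\<forall>a\<in>Poly_Mapping.keys f.
         (\<exists>p q. {p,q}\<in>E \<and> (Poly_Mapping.lookup a p \<noteq> 0 \<or> p=i) \<and> (Poly_Mapping.lookup a q \<noteq> 0 \<or> q=i)) \<and>
         (\<exists>p q. {p,q}\<in>E \<and> (Poly_Mapping.lookup a p \<noteq> 0 \<or> p=j) \<and> (Poly_Mapping.lookup a q \<noteq> 0 \<or> q=j)))"
      unfolding Int_iff edge_MI colon_MI ME ball_conj_distrib ..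
    also have "\<dots> \<longleftrightarrow> (\<forall>a\<in>Poly_Mapping.keys f.
      (\<exists>p q. {p,q}\<in>?E' \<and> Poly_Mapping.lookup a p \<noteq> 0 \<and> Poly_Mapping.lookup a q \<noteq> 0) \<or> (\<exists>p\<in>?L. Poly_Mapping.lookup a p \<noteq> 0))"
      by (rule ball_cong[OF refl], rule comb[OF simple edge])
    also have "\<dots> \<longleftrightarrow> f \<in> ideal_sum (edge_ideal ?E') (ideal_gen (var ` ?L))"
      unfolding edge_MI var_MI sum_MI mem_MI MR ..
    finally show "f \<in> colon (edge_ideal E) (var i) \<inter> colon (edge_ideal E) (var j) \<longleftrightarrow>
        f \<in> ideal_sum (edge_ideal ?E') (ideal_gen (var ` ?L))" .
  qed
qed

end
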